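(* In the setting below, for any $\vec w=(w_1,\ldots,w_n)$ with each $w_i\in W_M^Q$, \[ \theta(\vec w)-\theta^M(\vec w)=\mathrm{expdim}_G(\vec w)-\mathrm{expdim}_M(\vec w). \]
   Context: $G=\mathrm{Sp}(2r)$ with standard torus, Borel, positive roots $R^+$ ($\epsilon_i-\epsilon_j$, $i<j$; $\epsilon_i+\epsilon_j$, $i\le j$) and simple roots $\alpha_i=\epsilon_i-\epsilon_{i+1}$, $\alpha_r=2\epsilon_r$; $x_1,\ldots,x_r$ the dual basis to the simple roots. For $1\le k\le s<r$, $M\cong\mathrm{Sp}(2s)\times\mathrm{Sp}(2(r-s))$ is the centralizer in $G$ of $\tau=\mathrm{diag}(-1,\ldots,-1,1,\ldots,1,-1,\ldots,-1)$ ($2(r-s)$ ones), with roots the roots of $G$ trivial on $\tau$. $P$ is the maximal parabolic omitting $\alpha_k$ ($G/P\cong\mathrm{IG}(k,2r)$), $x_P=x_k$, $Q=M\cap P$ ($M/Q\cong\mathrm{IG}(k,2s)$), $x_Q=x_P$, $W_M^Q\subseteq W^P$ minimal coset representatives, $C_w$, $C^M_w$ the Schubert cells. $\chi_w=\sum_{\beta\in(R^+\setminus R^+_L)\cap w^{-1}R^+}\beta$ ($R_L^+$ positive roots of the Levi of $P$), $\chi^M_w$ the same sum over roots of $M$ only; $1$ denotes the identity of $W$. $\theta(\vec w)=(\chi_1-\sum_i\chi_{w_i})(x_P)$, $\theta^M(\vec w)=(\chi^M_1-\sum_i\chi^M_{w_i})(x_Q)$, $\mathrm{expdim}_G(\vec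 w)=\dim(G/P)-\sum_i\mathrm{codim}(C_{w_i})$, $\mathrm{expdim}_M(\vec w)=\dim(M/Q)-\sum_i\mathrm{codim}(C^M_{w_i})$. *)

theory Defs
  imports Complex_Main "HOL-Library.Function_Algebras"
begin

text \<open>Root datum of Sp(2r).  Weights / roots are integer vectors \<open>nat \<Rightarrow> int\<close>
  in the basis eps_1,...,eps_r (coordinates 1..r, all other coordinates 0).
  Coweights are rational vectors \<open>nat \<Rightarrow> rat\<close>; pairing is the standard one.\<close>

definition eps :: "nat \<Rightarrow> (nat \<Rightarrow> int)" where
  "eps i = (\<lambda>j. if j = i then 1 else 0)"

definition dotp :: "nat \<Rightarrow> (nat \<Rightarrow> int) \<Rightarrow> (nat \<Rightarrow> int) \<Rightarrow> int" where
  "dotp r v u = (\<Sum>i=1..r. v i * u i)"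

definition pos_roots :: "nat \<Rightarrow> (nat \<Rightarrow> int) set" where
  "pos_roots r = {eps i - eps j | i j. 1 \<le> i \<and> i < j \<and> j \<le> r}
               \<union> {eps i + eps j | i j. 1 \<le> i \<and> i \<le> j \<and> j \<le> r}"

definition roots :: "nat \<Rightarrow> (nat \<Rightarrow> int) set" where
  "roots r = pos_roots r \<union> uminus ` pos_roots r"

definition simple_root :: "nat \<Rightarrow> nat \<Rightarrow> (nat \<Rightarrow> int)" where
  "simple_root r i = (if i < r then eps i - eps (i+1) else 2 * eps r)"

text \<open>Dual basis x_1..x_r to the simple roots (pairing alpha_i(x_j) = delta_ij):
  x_j = eps_1 + ... + eps_j for j < r, and x_r = (eps_1 + ... + eps_r)/2.\<close>
definition coweight :: "nat \<Rightarrow> nat \<Rightarrow> (nat \<Rightarrow> rat)" where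
  "coweight r j = (\<lambda>i. if 1 \<le> i \<and> i \<le> r then (if j < r then (if i \<le> j then 1 else 0) else 1/2) else 0)"

definition pair :: "nat \<Rightarrow> (nat \<Rightarrow> int) \<Rightarrow> (nat \<Rightarrow> rat) \<Rightarrow> rat" where
  "pair r b x = (\<Sum>i=1..r. of_int (b i) * x i)"

text \<open>Reflection in the root a: s_a(v) = v - <v, a^vee> a  (exact division for roots).\<close>
definition refl :: "nat \<Rightarrow> (nat \<Rightarrow> int) \<Rightarrow> (nat \<Rightarrow> int) \<Rightarrow> (nat \<Rightarrow> int)" where
  "refl r a v = (\<lambda>i. v i - ((2 * dotp r v a) div (dotp r a a)) * a i)"

inductive_set weyl_group :: "nat \<Rightarrow> (nat \<Rightarrow> int) set \<Rightarrow> ((nat \<Rightarrow> int) \<Rightarrow> (nat \<Rightarrow> int)) set"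
  for r S where
  id_in: "id \<in> weyl_group r S"
| refl_in: "a \<in> S \<Longrightarrow> w \<in> weyl_group r S \<Longrightarrow> refl r a \<circ> w \<in> weyl_group r S"

definition len :: "(nat \<Rightarrow> int) set \<Rightarrow> ((nat \<Rightarrow> int) \<Rightarrow> (nat \<Rightarrow> int)) \<Rightarrow> nat" where
  "len Rp w = card {b \<in> Rp. w b \<notin> Rp}"

definition min_coset_reps where
  "min_coset_reps Rp Wbig Wsmall = {w \<in> Wbig. \<forall>v \<in> Wsmall. len Rp w \<le> len Rp (w \<circ> v)}"

text \<open>Roots of the Levi of the maximal parabolic P omitting alpha_k:
  roots on which x_k vanishes.\<close>
definition levi_roots :: "nat \<Rightarrow> nat \<Rightarrow> (nat \<Rightarrow> int) set" where
  "levi_roots r k = {b \<in> roots r. pair r b (coweight r k) = 0}"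

text \<open>tau = diag(-1,...,-1,1,...,1,-1,...,-1) is the torus element with
  t_i = -1 for i \<le> s and t_i = 1 for s < i \<le> r; a root b takes the value
  prod_i t_i^(b_i) = (-1)^(b_1+...+b_s) on tau.\<close>
definition trivial_on_tau :: "nat \<Rightarrow> (nat \<Rightarrow> int) \<Rightarrow> bool" where
  "trivial_on_tau s b \<longleftrightarrow> even (\<Sum>i=1..s. b i)"

definition M_roots :: "nat \<Rightarrow> nat \<Rightarrow> (nat \<Rightarrow> int) set" where
  "M_roots r s = {b \<in> roots r. trivial_on_tau s b}"

definition M_pos_roots :: "nat \<Rightarrow> nat \<Rightarrow> (nat \<Rightarrow> int) set" where
  "M_pos_roots r s = M_roots r s \<inter> pos_roots r"

definition chi :: "(nat \<Rightarrow> int) set \<Rightarrow> (nat \<Rightarrow> int) set \<Rightarrow> ((nat \<Rightarrow> int) \<Rightarrow> (nat \<Rightarrow> int)) \<Rightarrow> (nat \<Rightarrow> int)" where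
  "chi Rp RL w = (\<lambda>i. \<Sum>b \<in> {b \<in> Rp - RL. w b \<in> Rp}. b i)"

definition W_G where "W_G r = weyl_group r (roots r)"
definition W_M where "W_M r s = weyl_group r (M_roots r s)"
definition W_Q where "W_Q r s k = weyl_group r (M_roots r s \<inter> levi_roots r k)"
definition W_MQ where
  "W_MQ r s k = min_coset_reps (M_pos_roots r s) (W_M r s) (W_Q r s k)"

definition theta where
  "theta r k ws = pair r (chi (pos_roots r) (levi_roots r k) id
      - (\<Sum>w\<leftarrow>ws. chi (pos_roots r) (levi_roots r k) w)) (coweight r k)"
definition thetaM where
  "thetaM r s k ws = pair r (chi (M_pos_roots r s) (levi_roots r k) id
      - (\<Sum>w\<leftarrow>ws. chi (M_pos_roots r s) (levi_roots r k) w)) (coweight r k)"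

text \<open>dim G/P = |R^+ \ R_L^+|; Schubert cell C_w = BwP/P has dimension len(w).\<close>
definition dimGP where "dimGP r k = int (card (pos_roots r - levi_roots r k))"
definition dimMQ where "dimMQ r s k = int (card (M_pos_roots r s - levi_roots r k))"
definition codimG where "codimG r k w = dimGP r k - int (len (pos_roots r) w)"
definition codimM where "codimM r s k w = dimMQ r s k - int (len (M_pos_roots r s) w)"

definition expdimG where "expdimG r k ws = dimGP r k - (\<Sum>w\<leftarrow>ws. codimG r k w)"
definition expdimM where "expdimM r s k ws = dimMQ r s k - (\<Sum>w\<leftarrow>ws. codimM r s k w)"

end

theory Submission imports Defs begin

definition rv :: "nat \<Rightarrow> nat \<Rightarrow> int \<Rightarrow> int \<Rightarrow> nat \<Rightarrow> int" where
  "rv i j x y = (\<lambda>l. x * eps i l + y * eps j l)"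

definition okr :: "nat \<Rightarrow> nat \<Rightarrow> nat \<Rightarrow> int \<Rightarrow> int \<Rightarrow> bool" where
  "okr r i j x y \<longleftrightarrow> 1 \<le> i \<and> i \<le> r \<and> 1 \<le> j \<and> j \<le> r \<and> (x = 1 \<or> x = -1) \<and> (y = 1 \<or> y = -1) \<and> (i = j \<longrightarrow> x = y)"

lemma rv_app: "rv i j x y l = (if l = i then x else 0) + (if l = j then y else 0)"
  by (simp add: rv_def eps_def)

lemma sum_rv: "finite A \<Longrightarrow> (\<Sum>l\<in>A. rv i j x y l) = (if i \<in> A then x else 0) + (if j \<in> A then y else 0)"
  by (simp add: rv_app sum.distrib)

lemma pos_char: "b \<in> pos_roots r \<longleftrightarrow> (\<exists>i j y. okr r i j 1 y \<and> i \<le> j \<and> b = rv i j 1 y)"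
proof
  assume "b \<in> pos_roots r"
  then show "\<exists>i j y. okr r i j 1 y \<and> i \<le> j \<and> b = rv i j 1 y"
    unfolding pos_roots_def
  proof (elim UnE CollectE exE conjE)
    fix i j assume h: "b = eps i - eps j" "1 \<le> i" "i < j" "j \<le> r"
    then have "b = rv i j 1 (-1)" by (auto simp: rv_def fun_eq_iff)
    with h show ?thesis by (intro exI[of _ i] exI[of _ j] exI[of _ "-1"]) (auto simp: okr_def)
  next
    fix i j assume h: "b = eps i + eps j" "1 \<le> i" "i \<le> j" "j \<le> r"
    then have "b = rv i j 1 1" by (auto simp: rv_def fun_eq_iff)
    with h show ?thesis by (intro exI[of _ i] exI[of _ j] exI[of _ "1"]) (auto simp: okr_def)
  qed
next
  assume "\<exists>i j y. okr r i j 1 y \<and> i \<le> j \<and> b = rv i j 1 y"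
  then obtain i j y where h: "okr r i j 1 y" "i \<le> j" "b = rv i j 1 y" by blast
  show "b \<in> pos_roots r"
  proof (cases "y = 1")
    case True
    then have "b = eps i + eps j" using h by (auto simp: rv_def fun_eq_iff)
    then show ?thesis using h unfolding pos_roots_def okr_def by blast
  next
    case False
    then have "y = -1" "i < j" using h by (auto simp: okr_def)
    then have "b = eps i - eps j" using h by (auto simp: rv_def fun_eq_iff)
    then show ?thesis using h \<open>i<j\<close> unfolding pos_roots_def okr_def by blast
  qed
qed

lemma neg_rv: "- rv i j x y = rv i j (-x) (-y)"
  by (auto simp: rv_def fun_eq_iff)

lemma rv_swap: "rv i j x y = rv j i y x"
  by (auto simp: rv_def fun_eq_iff)

lemma okr_swap: "okr r i j x y \<Longrightarrow> okr r j i y x"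
  by (auto simp: okr_def)

lemma roots_char: "b \<in> roots r \<longleftrightarrow> (\<exists>i j x y. okr r i j x y \<and> b = rv i j x y)"
proof
  assume "b \<in> roots r"
  then show "\<exists>i j x y. okr r i j x y \<and> b = rv i j x y"
    unfolding roots_def
  proof
    assume "b \<in> pos_roots r" then show ?thesis by (auto simp: pos_char)
  next
    assume "b \<in> uminus ` pos_roots r"
    then obtain i j y where h: "okr r i j 1 y" "b = - rv i j 1 y" by (auto simp: pos_char)
    then have "b = rv i j (-1) (-y)" by (simp add: neg_rv)
    moreover have "okr r i j (-1) (-y)" using h(1) by (auto simp: okr_def)
    ultimately show ?thesis by blast
  qed
next
  assume "\<exists>i j x y. okr r i j x y \<and> b = rv i j x y"
  then obtain i j x y where h: "okr r i j x y" "b = rv i j x y" by blast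
  have key: "okr r p q x' y' \<Longrightarrow> (p \<le> q \<and> x' = 1) \<or> (q < p \<and> y' = 1) \<Longrightarrow> rv p q x' y' \<in> pos_roots r" for p q x' y'
  proof -
    assume a: "okr r p q x' y'" "(p \<le> q \<and> x' = 1) \<or> (q < p \<and> y' = 1)"
    show ?thesis
    proof (cases "p \<le> q")
      case True
      with a have "x' = 1" by (auto simp: okr_def)
      then show ?thesis using a True by (auto simp: pos_char)
    next
      case False
      with a have "y' = 1" by (auto simp: okr_def)
      then show ?thesis using a False okr_swap[OF a(1)] unfolding pos_char rv_swap[of p] by (intro exI[of _ q] exI[of _ p] exI[of _ x']) auto
    qed
  qed
  show "b \<in> roots r"
  proof (cases "(i \<le> j \<and> x = 1) \<or> (j < i \<and> y = 1)")
    case True then show ?thesis using key h unfolding roots_def by blast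
  next
    case False
    have "okr r i j (-x) (-y)" using h by (auto simp: okr_def)
    moreover have "(i \<le> j \<and> -x = 1) \<or> (j < i \<and> -y = 1)" using False h(1) unfolding okr_def by auto
    ultimately have "rv i j (-x) (-y) \<in> pos_roots r" using key by blast
    then have "b \<in> uminus ` pos_roots r" using h by (auto simp: neg_rv image_iff intro!: bexI[of _ "rv i j (-x) (-y)"])
    then show ?thesis unfolding roots_def by blast
  qed
qed

lemma rv_eq_fst:
  assumes "okr r p q x y" "okr r i j x' y'" "p \<le> q" "i \<le> j" "rv p q x y = rv i j x' y'"
  shows "x = x'"
proof -
  have a: "rv p q x y p = rv i j x' y' p" "rv p q x y i = rv i j x' y' i" using assms(5) by auto
  show ?thesis using a assms(1-4) unfolding rv_app okr_def by (auto split: if_splits)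
qed

lemma pos_intro: "okr r p q x' y' \<Longrightarrow> (p \<le> q \<and> x' = 1) \<or> (q < p \<and> y' = 1) \<Longrightarrow> rv p q x' y' \<in> pos_roots r"
proof -
    assume a: "okr r p q x' y'" "(p \<le> q \<and> x' = 1) \<or> (q < p \<and> y' = 1)"
    show ?thesis
    proof (cases "p \<le> q")
      case True
      with a have "x' = 1" by (auto simp: okr_def)
      then show ?thesis using a True by (auto simp: pos_char)
    next
      case False
      with a have "y' = 1" by (auto simp: okr_def)
      then show ?thesis using a False okr_swap[OF a(1)] unfolding pos_char rv_swap[of p] by (intro exI[of _ q] exI[of _ p] exI[of _ x']) auto
    qed
qed

lemma pos_test: "okr r p q x y \<Longrightarrow> rv p q x y \<in> pos_roots r \<longleftrightarrow> (p \<le> q \<and> x = 1) \<or> (q < p \<and> y = 1)"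
proof
  assume o: "okr r p q x y" and "rv p q x y \<in> pos_roots r"
  then obtain i j y' where h: "okr r i j 1 y'" "i \<le> j" "rv p q x y = rv i j 1 y'" by (auto simp: pos_char)
  show "(p \<le> q \<and> x = 1) \<or> (q < p \<and> y = 1)"
  proof (cases "p \<le> q")
    case True then show ?thesis using rv_eq_fst[OF o h(1) True h(2) h(3)] by simp
  next
    case False
    have "y = 1" using rv_eq_fst[OF okr_swap[OF o] h(1) _ h(2)] h(3) False by (simp add: rv_swap[of p])
    then show ?thesis using False by simp
  qed
qed (rule pos_intro)

lemma finite_pos: "finite (pos_roots r)"
proof -
  have "pos_roots r \<subseteq> (\<lambda>(i,j,y). rv i j 1 y) ` ({1..r} \<times> {1..r} \<times> {1,-1})"
  proof
    fix b assume "b \<in> pos_roots r"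
    then obtain i j y where h: "okr r i j 1 y" "b = rv i j 1 y" by (auto simp: pos_char)
    then have "(i,j,y) \<in> {1..r} \<times> {1..r} \<times> {1,-1}" by (auto simp: okr_def)
    then show "b \<in> (\<lambda>(i,j,y). rv i j 1 y) ` ({1..r} \<times> {1..r} \<times> {1,-1})"
      using h(2) by (auto intro!: image_eqI[of _ _ "(i,j,y)"])
  qed
  then show ?thesis by (rule finite_subset) auto
qed

lemma tau_rv: "okr r i j x y \<Longrightarrow> trivial_on_tau s (rv i j x y) \<longleftrightarrow> (i \<le> s \<longleftrightarrow> j \<le> s)"
  unfolding trivial_on_tau_def by (subst sum_rv) (auto simp: okr_def)

lemma M_char: "b \<in> M_roots r s \<longleftrightarrow> (\<exists>i j x y. okr r i j x y \<and> (i \<le> s \<longleftrightarrow> j \<le> s) \<and> b = rv i j x y)"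
  unfolding M_roots_def roots_char using tau_rv by blast

lemma pair_cow: "k < r \<Longrightarrow> pair r b (coweight r k) = of_int (\<Sum>l\<in>{1..k}. b l)"
proof -
  assume k: "k < r"
  have "pair r b (coweight r k) = (\<Sum>l\<in>{1..r}. if l \<le> k then of_int (b l) else 0)"
    unfolding pair_def coweight_def using k by (intro sum.cong) auto
  also have "\<dots> = (\<Sum>l\<in>{l\<in>{1..r}. l \<le> k}. of_int (b l))"
    using sum.inter_filter[of "{1..r}" "\<lambda>l. of_int (b l) :: rat" "\<lambda>l. l \<le> k"] by simp
  also have "{l\<in>{1..r}. l \<le> k} = {1..k}" using k by auto
  finally show ?thesis by simp
qed

lemma pair_rv: "k < r \<Longrightarrow> okr r i j x y \<Longrightarrow> pair r (rv i j x y) (coweight r k) = of_int ((if i \<le> k then x else 0) + (if j \<le> k then y else 0))"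
  by (simp add: pair_cow sum_rv okr_def)

definition tr :: "nat \<Rightarrow> nat \<Rightarrow> nat \<Rightarrow> nat" where
  "tr i j l = (if l = i then j else if l = j then i else l)"

lemma dotp_rv: "okr r i j x y \<Longrightarrow> dotp r v (rv i j x y) = x * v i + y * v j"
proof -
  assume o: "okr r i j x y"
  have "dotp r v (rv i j x y) = (\<Sum>l\<in>{1..r}. x * (if l = i then v l else 0) + y * (if l = j then v l else 0))"
    unfolding dotp_def rv_app by (intro sum.cong) (auto simp: algebra_simps)
  also have "\<dots> = x * v i + y * v j" using o
    by (simp add: sum.distrib sum_distrib_left[symmetric] okr_def)
  finally show ?thesis .
qed

lemma refl_rv:
  assumes "okr r i j x y"
  shows "refl r (rv i j x y) = (\<lambda>v l. (if l = i \<or> l = j then - x * y else 1) * v (tr i j l))"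
proof -
  have aa: "dotp r (rv i j x y) (rv i j x y) = (if i = j then 4 else 2)"
    using assms by (simp add: dotp_rv) (auto simp: rv_app okr_def)
  show ?thesis
  proof (intro ext)
    fix v l
    define q where "q = (if i = j then x * v i else x * v i + y * v j)"
    have "2 * dotp r v (rv i j x y) div dotp r (rv i j x y) (rv i j x y) = 2 * (x * v i + y * v j) div (if i = j then 4 else 2)"
      unfolding aa unfolding dotp_rv[OF assms] ..
    also have "\<dots> = q"
    proof (cases "i = j")
      case True
      then have "y = x" using assms by (auto simp: okr_def)
      then have "2 * (x * v i + y * v j) = 4 * (x * v i)" using True by simp
      then have "2 * (x * v i + y * v j) div 4 = x * v i" by simp
      then show ?thesis using True unfolding q_def by (simp only: if_True simp_thms)
    qed (simp add: q_def)
    finally have "2 * dotp r v (rv i j x y) div dotp r (rv i j x y) (rv i j x y) = q" .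
    then show "refl r (rv i j x y) v l = (if l = i \<or> l = j then - x * y else 1) * v (tr i j l)"
      using assms unfolding refl_def q_def by (auto simp: rv_app tr_def okr_def algebra_simps)
  qed
qed

definition SPg :: "nat \<Rightarrow> nat \<Rightarrow> (nat \<Rightarrow> nat) \<Rightarrow> (nat \<Rightarrow> nat) \<Rightarrow> (nat \<Rightarrow> int) \<Rightarrow> bool" where
  "SPg r s g f c \<longleftrightarrow> (\<forall>j. g (f j) = j) \<and> (\<forall>j. f (g j) = j) \<and> (\<forall>j. (1 \<le> g j \<and> g j \<le> r) = (1 \<le> j \<and> j \<le> r))
     \<and> (\<forall>j. (g j \<le> s) = (j \<le> s)) \<and> (\<forall>j. c j = 1 \<or> c j = -1)"

definition SP where
  "SP r s w \<longleftrightarrow> (\<exists>g f c. SPg r s g f c \<and> w = (\<lambda>v j. c j * v (g j)))"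

lemma SP_id: "SP r s id"
  unfolding SP_def SPg_def by (intro exI[of _ id] exI[of _ "\<lambda>_. 1"]) (auto simp: fun_eq_iff)

lemma tr_tr: "tr i j (tr i j l) = l" by (auto simp: tr_def)

lemma SP_refl:
  assumes "a \<in> M_roots r s" "SP r s w"
  shows "SP r s (refl r a \<circ> w)"
proof -
  obtain i j x y where a: "okr r i j x y" "(i \<le> s \<longleftrightarrow> j \<le> s)" "a = rv i j x y"
    using assms(1) by (auto simp: M_char)
  obtain g f c where w: "SPg r s g f c" "w = (\<lambda>v j. c j * v (g j))"
    using assms(2) by (auto simp: SP_def)
  define d where "d = (\<lambda>l. if l = i \<or> l = j then - x * y else 1)"
  have "refl r a \<circ> w = (\<lambda>v l. (d l * c (tr i j l)) * v ((g \<circ> tr i j) l))"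
    unfolding a(3) refl_rv[OF a(1)] w(2) d_def by (auto simp: fun_eq_iff)
  moreover have "SPg r s (g \<circ> tr i j) (tr i j \<circ> f) (\<lambda>l. d l * c (tr i j l))"
  proof -
    have g: "\<forall>j. g (f j) = j" "\<forall>j. f (g j) = j" "\<forall>j. (1 \<le> g j \<and> g j \<le> r) = (1 \<le> j \<and> j \<le> r)"
       "\<forall>j. (g j \<le> s) = (j \<le> s)" "\<forall>j. c j = 1 \<or> c j = -1" using w(1) unfolding SPg_def by blast+
    have i: "1 \<le> i" "i \<le> r" "1 \<le> j" "j \<le> r" "x = 1 \<or> x = -1" "y = 1 \<or> y = -1" using a(1) unfolding okr_def by blast+
    have "(g \<circ> tr i j) ((tr i j \<circ> f) l) = l" for l using g(1) by (simp add: tr_tr)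
    moreover have "(tr i j \<circ> f) ((g \<circ> tr i j) l) = l" for l using g(2) by (simp add: tr_tr)
    moreover have "(1 \<le> (g \<circ> tr i j) l \<and> (g \<circ> tr i j) l \<le> r) = (1 \<le> l \<and> l \<le> r)" for l
      using g(3) i(1-4) by (simp add: tr_def)
    moreover have "((g \<circ> tr i j) l \<le> s) = (l \<le> s)" for l
      using g(4) a(2) by (simp add: tr_def)
    moreover have "d l * c (tr i j l) = 1 \<or> d l * c (tr i j l) = -1" for l
      using g(5)[rule_format, of "tr i j l"] i(5,6) unfolding d_def by auto
    ultimately show ?thesis unfolding SPg_def by blast
  qed
  ultimately show ?thesis unfolding SP_def by blast
qed

lemma SP_WM: "w \<in> W_M r s \<Longrightarrow> SP r s w"
  unfolding W_M_def
proof (induction rule: weyl_group.induct)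
  case id_in then show ?case by (rule SP_id)
next
  case (refl_in a w) then show ?case using SP_refl by blast
qed

lemma SPg_rv:
  assumes "SPg r s g f c"
  shows "(\<lambda>j. c j * rv p q x y (g j)) = rv (f p) (f q) (x * c (f p)) (y * c (f q))"
proof -
  have "g l = p \<longleftrightarrow> l = f p" for l p using assms unfolding SPg_def by metis
  then show ?thesis by (auto simp: fun_eq_iff rv_app algebra_simps)
qed

lemma SPg_okr:
  assumes "SPg r s g f c" "okr r p q x y"
  shows "okr r (f p) (f q) (x * c (f p)) (y * c (f q))"
proof -
  have inj: "f p = f q \<longleftrightarrow> p = q" using assms(1) unfolding SPg_def by metis
  have rng: "(1 \<le> f j \<and> f j \<le> r) = (1 \<le> j \<and> j \<le> r)" for j
    using assms(1) unfolding SPg_def by metis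
  have cc: "c j = 1 \<or> c j = -1" for j using assms(1) unfolding SPg_def by blast
  show ?thesis using assms(2) inj rng[of p] rng[of q] cc[of "f p"] cc[of "f q"] unfolding okr_def
    by auto
qed

lemma SPg_blk: "SPg r s g f c \<Longrightarrow> (f j \<le> s) = (j \<le> s)"
  unfolding SPg_def by metis

lemma SPg_M: "SPg r s g f c \<Longrightarrow> b \<in> M_roots r s \<Longrightarrow> (\<lambda>j. c j * b (g j)) \<in> M_roots r s"
proof -
  assume sp: "SPg r s g f c" and "b \<in> M_roots r s"
  then obtain i j x y where h: "okr r i j x y" "(i \<le> s \<longleftrightarrow> j \<le> s)" "b = rv i j x y" by (auto simp: M_char)
  show ?thesis unfolding h(3) SPg_rv[OF sp] M_char
    using SPg_okr[OF sp h(1)] h(2) SPg_blk[OF sp, of i] SPg_blk[OF sp, of j] by blast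
qed

lemma Mpos_char: "b \<in> M_pos_roots r s \<longleftrightarrow> (\<exists>p q x y. okr r p q x y \<and> (p \<le> s \<longleftrightarrow> q \<le> s) \<and> ((p \<le> q \<and> x = 1) \<or> (q < p \<and> y = 1)) \<and> b = rv p q x y)"
proof
  assume "b \<in> M_pos_roots r s"
  then obtain p q x y where h: "okr r p q x y" "(p \<le> s \<longleftrightarrow> q \<le> s)" "b = rv p q x y" "b \<in> pos_roots r"
    using M_char[of b r s] unfolding M_pos_roots_def by blast
  then show "\<exists>p q x y. okr r p q x y \<and> (p \<le> s \<longleftrightarrow> q \<le> s) \<and> ((p \<le> q \<and> x = 1) \<or> (q < p \<and> y = 1)) \<and> b = rv p q x y"
    using pos_test[OF h(1)] by blast
next
  assume "\<exists>p q x y. okr r p q x y \<and> (p \<le> s \<longleftrightarrow> q \<le> s) \<and> ((p \<le> q \<and> x = 1) \<or> (q < p \<and> y = 1)) \<and> b = rv p q x y"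
  then obtain p q x y where h: "okr r p q x y" "(p \<le> s \<longleftrightarrow> q \<le> s)" "((p \<le> q \<and> x = 1) \<or> (q < p \<and> y = 1))" "b = rv p q x y"
    by blast
  then show "b \<in> M_pos_roots r s" unfolding M_pos_roots_def using M_char[of b r s] pos_test[OF h(1)] by blast
qed

lemma neg_not_pos: "b \<in> pos_roots r \<Longrightarrow> - b \<notin> pos_roots r"
proof
  assume "b \<in> pos_roots r" "- b \<in> pos_roots r"
  then obtain i j y where h: "okr r i j 1 y" "i \<le> j" "b = rv i j 1 y" by (auto simp: pos_char)
  have "okr r i j (-1) (-y)" using h(1) by (auto simp: okr_def)
  moreover have "- b = rv i j (-1) (-y)" using h(3) by (simp add: neg_rv)
  ultimately show False using pos_test[of r i j "-1" "-y"] \<open>- b \<in> pos_roots r\<close> h(2) by auto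
qed

lemma negM: "b \<in> M_roots r s \<Longrightarrow> b \<notin> M_pos_roots r s \<Longrightarrow> - b \<in> M_pos_roots r s"
proof -
  assume "b \<in> M_roots r s" "b \<notin> M_pos_roots r s"
  then obtain i j x y where h: "okr r i j x y" "(i \<le> s \<longleftrightarrow> j \<le> s)" "b = rv i j x y" by (auto simp: M_char)
  have np: "\<not> ((i \<le> j \<and> x = 1) \<or> (j < i \<and> y = 1))" using h \<open>b \<notin> M_pos_roots r s\<close> Mpos_char by blast
  have o: "okr r i j (-x) (-y)" using h(1) by (auto simp: okr_def)
  have "(i \<le> j \<and> -x = 1) \<or> (j < i \<and> -y = 1)" using np h(1) by (auto simp: okr_def)
  then show ?thesis unfolding Mpos_char using o h(2) h(3) neg_rv by metis
qed

lemma M_neg: "b \<in> M_roots r s \<Longrightarrow> - b \<in> M_roots r s"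
proof -
  assume "b \<in> M_roots r s"
  then obtain i j x y where h: "okr r i j x y" "(i \<le> s \<longleftrightarrow> j \<le> s)" "b = rv i j x y" by (auto simp: M_char)
  have o: "okr r i j (-x) (-y)" using h(1) by (auto simp: okr_def)
  then show ?thesis unfolding M_char using h neg_rv by metis
qed

lemma finite_Mpos: "finite (M_pos_roots r s)"
  unfolding M_pos_roots_def using finite_pos by blast

lemma len_drop:
  assumes fin: "finite P" and al: "\<alpha> \<in> P" and sig: "\<forall>b\<in>P-{\<alpha>}. \<sigma> b \<in> P - {\<alpha>}"
    and inv: "\<forall>v. \<sigma> (\<sigma> v) = v" and wsa: "w (\<sigma> \<alpha>) \<in> P" and wa: "w \<alpha> \<notin> P"
  shows "len P (w \<circ> \<sigma>) < len P w"
proof -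
  define A where "A = {b \<in> P. w b \<notin> P}"
  define B where "B = {b \<in> P. (w \<circ> \<sigma>) b \<notin> P}"
  have "\<sigma> ` B \<subseteq> A - {\<alpha>}"
  proof
    fix z assume "z \<in> \<sigma> ` B"
    then obtain b where b: "b \<in> B" "z = \<sigma> b" by blast
    then have "b \<noteq> \<alpha>" using wsa unfolding B_def by auto
    then show "z \<in> A - {\<alpha>}" using b sig unfolding A_def B_def by auto
  qed
  moreover have "inj_on \<sigma> B" by (metis inv inj_onI)
  moreover have "finite A" using fin unfolding A_def by auto
  ultimately have "card B \<le> card (A - {\<alpha>})"
    by (metis card_image card_mono finite_Diff)
  moreover have "\<alpha> \<in> A" using al wa unfolding A_def by auto
  then have "card (A - {\<alpha>}) < card A" using \<open>finite A\<close> by (meson card_Diff1_less)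
  ultimately show ?thesis unfolding len_def A_def B_def by linarith
qed

lemma refl_self: "okr r i j x y \<Longrightarrow> refl r (rv i j x y) (rv i j x y) = - rv i j x y"
  unfolding refl_rv neg_rv by (auto simp: fun_eq_iff rv_app tr_def okr_def)

lemma refl_app: "okr r i j x y \<Longrightarrow> refl r (rv i j x y) (rv p q x' y') =
   rv (tr i j p) (tr i j q) (x' * (if tr i j p = i \<or> tr i j p = j then - x * y else 1)) (y' * (if tr i j q = i \<or> tr i j q = j then - x * y else 1))"
  unfolding refl_rv by (auto simp: fun_eq_iff rv_app tr_def algebra_simps)

lemma refl_inv: "okr r i j x y \<Longrightarrow> refl r (rv i j x y) (refl r (rv i j x y) v) = v"
  unfolding refl_rv by (auto simp: fun_eq_iff tr_def okr_def)

lemma sig_gen: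
  assumes o: "okr r i j x y" and al: "rv i j x y \<in> M_pos_roots r s"
    and step: "\<And>b. b \<in> M_pos_roots r s \<Longrightarrow> b \<noteq> rv i j x y \<Longrightarrow> refl r (rv i j x y) b \<in> M_pos_roots r s"
  shows "\<forall>b\<in>M_pos_roots r s - {rv i j x y}. refl r (rv i j x y) b \<in> M_pos_roots r s - {rv i j x y}"
proof
  fix b assume b: "b \<in> M_pos_roots r s - {rv i j x y}"
  have "refl r (rv i j x y) b \<noteq> rv i j x y"
  proof
    assume "refl r (rv i j x y) b = rv i j x y"
    then have "b = - rv i j x y" using refl_inv[OF o, of b] refl_self[OF o] by metis
    then show False using b al neg_not_pos unfolding M_pos_roots_def by blast
  qed
  then show "refl r (rv i j x y) b \<in> M_pos_roots r s - {rv i j x y}" using step b by blast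
qed

lemma tr_range: "1 \<le> i \<Longrightarrow> i \<le> r \<Longrightarrow> 1 \<le> j \<Longrightarrow> j \<le> r \<Longrightarrow> (1 \<le> tr i j l \<and> tr i j l \<le> r) = (1 \<le> l \<and> l \<le> r)"
  unfolding tr_def by auto

lemma tr_inj: "tr i j p = tr i j q \<longleftrightarrow> p = q"
  unfolding tr_def by auto

lemma tr_blk: "(i \<le> s \<longleftrightarrow> j \<le> s) \<Longrightarrow> (tr i j l \<le> s) = (l \<le> s)"
  unfolding tr_def by auto

lemma tr_ord: "p < q \<Longrightarrow> \<not> (p = i \<and> q = Suc i) \<Longrightarrow> tr i (Suc i) p < tr i (Suc i) q"
  unfolding tr_def by auto

lemma okr_tr:
  assumes "okr r p q x y" "1 \<le> i" "i \<le> r" "1 \<le> j" "j \<le> r"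
  shows "okr r (tr i j p) (tr i j q) x y"
proof -
  have "(1 \<le> tr i j p \<and> tr i j p \<le> r)" "(1 \<le> tr i j q \<and> tr i j q \<le> r)"
    using assms tr_range[OF assms(2-5)] unfolding okr_def by blast+
  then show ?thesis using assms(1) tr_inj[of i j p q] unfolding okr_def by blast
qed

lemma sig1:
  assumes "1 \<le> i" "i + 1 \<le> s" "s < r"
  shows "\<forall>b\<in>M_pos_roots r s - {rv i (i+1) 1 (-1)}. refl r (rv i (i+1) 1 (-1)) b \<in> M_pos_roots r s - {rv i (i+1) 1 (-1)}"
proof (rule sig_gen)
  show o: "okr r i (i+1) 1 (-1)" using assms by (auto simp: okr_def)
  show "rv i (i+1) 1 (-1) \<in> M_pos_roots r s" unfolding Mpos_char using o assms
    by (intro exI[of _ i] exI[of _ "i+1"] exI[of _ 1] exI[of _ "-1"]) auto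
  fix b assume b: "b \<in> M_pos_roots r s" "b \<noteq> rv i (i+1) 1 (-1)"
  then obtain p q x y where h: "okr r p q x y" "(p \<le> s \<longleftrightarrow> q \<le> s)" "((p \<le> q \<and> x = 1) \<or> (q < p \<and> y = 1))" "b = rv p q x y"
    unfolding Mpos_char by blast
  have ne: "\<not> (p = i \<and> q = Suc i \<and> x = 1 \<and> y = -1)" "\<not> (q = i \<and> p = Suc i \<and> y = 1 \<and> x = -1)"
    using b(2) h(4) rv_swap by auto
  have "refl r (rv i (i+1) 1 (-1)) b = rv (tr i (i+1) p) (tr i (i+1) q) x y"
    unfolding h(4) refl_app[OF o] by simp
  moreover have "okr r (tr i (i+1) p) (tr i (i+1) q) x y" using okr_tr[OF h(1)] assms by simp
  moreover have "(tr i (i+1) p \<le> s \<longleftrightarrow> tr i (i+1) q \<le> s)" 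
  proof -
    have "(i \<le> s \<longleftrightarrow> i + 1 \<le> s)" using assms by simp
    then show ?thesis using h(2) tr_blk[where i=i and j="i+1" and s=s] by blast
  qed
  moreover have "(tr i (Suc i) p \<le> tr i (Suc i) q \<and> x = 1) \<or> (tr i (Suc i) q < tr i (Suc i) p \<and> y = 1)"
  proof -
    consider "p < q" | "p = q" | "q < p" by linarith
    then show ?thesis
    proof cases
      case 1
      show ?thesis
      proof (cases "p = i \<and> q = Suc i")
        case True
        then have "x = 1" "y \<noteq> -1" using h(3) ne(1) 1 by auto
        then have "y = 1" using h(1) unfolding okr_def by blast
        then show ?thesis using True by (simp add: tr_def)
      next
        case False
        then show ?thesis using tr_ord[OF 1 False] h(3) 1 by auto
      qed
    next
      case 2 then show ?thesis using h(3) by auto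
    next
      case 3
      show ?thesis
      proof (cases "q = i \<and> p = Suc i")
        case True
        then have "y = 1" "x \<noteq> -1" using h(3) ne(2) 3 by auto
        then have "x = 1" using h(1) unfolding okr_def by blast
        then show ?thesis using True by (simp add: tr_def)
      next
        case False
        then show ?thesis using tr_ord[OF 3 False] h(3) 3 by auto
      qed
    qed
  qed
  ultimately show "refl r (rv i (i+1) 1 (-1)) b \<in> M_pos_roots r s" unfolding Mpos_char by auto
qed

lemma sig2:
  assumes "1 \<le> s" "s < r"
  shows "\<forall>b\<in>M_pos_roots r s - {rv s s 1 1}. refl r (rv s s 1 1) b \<in> M_pos_roots r s - {rv s s 1 1}"
proof (rule sig_gen)
  show o: "okr r s s 1 1" using assms by (auto simp: okr_def)
  show "rv s s 1 1 \<in> M_pos_roots r s" unfolding Mpos_char using o assms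
    by (intro exI[of _ s] exI[of _ s] exI[of _ 1] exI[of _ 1]) auto
  fix b assume b: "b \<in> M_pos_roots r s" "b \<noteq> rv s s 1 1"
  then obtain p q x y where h: "okr r p q x y" "(p \<le> s \<longleftrightarrow> q \<le> s)" "((p \<le> q \<and> x = 1) \<or> (q < p \<and> y = 1))" "b = rv p q x y"
    unfolding Mpos_char by blast
  have ne: "\<not> (p = s \<and> q = s)"
  proof
    assume "p = s \<and> q = s"
    then have "x = 1" "y = x" using h(1,3) unfolding okr_def by auto
    then show False using b(2) h(4) \<open>p = s \<and> q = s\<close> by simp
  qed
  define x' where "x' = (if p = s then -x else x)"
  define y' where "y' = (if q = s then -y else y)"
  have "refl r (rv s s 1 1) b = rv p q x' y'"
    unfolding h(4) refl_app[OF o] x'_def y'_def by (simp add: tr_def)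
  moreover have "okr r p q x' y'" using h(1) ne unfolding okr_def x'_def y'_def by auto
  moreover have "(p \<le> q \<and> x' = 1) \<or> (q < p \<and> y' = 1)"
  proof (cases "p \<le> q")
    case True
    then have "p \<noteq> s" using h(2) ne by auto
    then show ?thesis using True h(3) unfolding x'_def by auto
  next
    case False
    then have "q \<noteq> s" using h(2) ne by auto
    then show ?thesis using False h(3) unfolding y'_def by auto
  qed
  ultimately show "refl r (rv s s 1 1) b \<in> M_pos_roots r s" unfolding Mpos_char using h(2) by blast
qed

lemma WMQ_simple:
  assumes w: "w \<in> W_MQ r s k" and o: "okr r i j x y" and al: "rv i j x y \<in> M_pos_roots r s"
    and lv: "rv i j x y \<in> levi_roots r k"
    and sig: "\<forall>b\<in>M_pos_roots r s - {rv i j x y}. refl r (rv i j x y) b \<in> M_pos_roots r s - {rv i j x y}"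
  shows "w (rv i j x y) \<in> M_pos_roots r s"
proof (rule ccontr)
  assume na: "w (rv i j x y) \<notin> M_pos_roots r s"
  define \<alpha> where "\<alpha> = rv i j x y"
  have wm: "w \<in> W_M r s" and mn: "\<forall>v\<in>W_Q r s k. len (M_pos_roots r s) w \<le> len (M_pos_roots r s) (w \<circ> v)"
    using w unfolding W_MQ_def min_coset_reps_def by auto
  obtain g f c where sp: "SPg r s g f c" "w = (\<lambda>v j. c j * v (g j))"
    using SP_WM[OF wm] unfolding SP_def by blast
  have aM: "\<alpha> \<in> M_roots r s \<inter> levi_roots r k" using al lv unfolding \<alpha>_def M_pos_roots_def by auto
  have "refl r \<alpha> \<circ> id \<in> W_Q r s k" unfolding W_Q_def
    by (rule weyl_group.refl_in[OF aM weyl_group.id_in])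
  then have le: "len (M_pos_roots r s) w \<le> len (M_pos_roots r s) (w \<circ> refl r \<alpha>)" using mn by auto
  have wM: "w \<alpha> \<in> M_roots r s" using SPg_M[OF sp(1)] aM unfolding sp(2) by auto
  have "w (refl r \<alpha> \<alpha>) = - w \<alpha>" unfolding \<alpha>_def refl_self[OF o] sp(2) by (auto simp: fun_eq_iff)
  then have "w (refl r \<alpha> \<alpha>) \<in> M_pos_roots r s" using negM[OF wM] na \<alpha>_def by simp
  then have "len (M_pos_roots r s) (w \<circ> refl r \<alpha>) < len (M_pos_roots r s) w"
    using len_drop[OF finite_Mpos, where \<alpha>=\<alpha> and \<sigma>="refl r \<alpha>" and w=w] al sig refl_inv[OF o] na unfolding \<alpha>_def by blast
  then show False using le by simp
qed

lemma in_levi: "k < r \<Longrightarrow> okr r i j x y \<Longrightarrow> ((if i \<le> k then x else 0) + (if j \<le> k then y else 0)) = 0 \<Longrightarrow> rv i j x y \<in> levi_roots r k"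
  unfolding levi_roots_def roots_char using pair_rv by auto

lemma WMQ_c:
  assumes w: "w \<in> W_MQ r s k" and ks: "1 \<le> k" "k \<le> s" "s < r"
    and sp: "SPg r s g f c" "w = (\<lambda>v j. c j * v (g j))"
  shows "k < i \<Longrightarrow> i \<le> s \<Longrightarrow> c (f i) = 1"
proof -
  have cc: "c j = 1 \<or> c j = -1" for j using sp(1) unfolding SPg_def by blast
  have wrv: "w (rv p q x y) = rv (f p) (f q) (x * c (f p)) (y * c (f q))" for p q x y
    unfolding sp(2) SPg_rv[OF sp(1)] ..
  have P: "\<forall>n. k < s - n \<longrightarrow> c (f (s - n)) = 1"
  proof
    fix n show "k < s - n \<longrightarrow> c (f (s - n)) = 1"
    proof (induction n)
      case 0
      show ?case
      proof
        assume "k < s - 0"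
        have o: "okr r s s 1 1" using ks by (auto simp: okr_def)
        have "rv s s 1 1 \<in> M_pos_roots r s" unfolding Mpos_char using o
          by (intro exI[of _ s] exI[of _ s] exI[of _ 1] exI[of _ 1]) auto
        moreover have "rv s s 1 1 \<in> levi_roots r k" using in_levi[OF _ o] \<open>k < s - 0\<close> ks by auto
        ultimately have "w (rv s s 1 1) \<in> M_pos_roots r s"
          using WMQ_simple[OF w o] sig2 ks by auto
        then have "rv (f s) (f s) (c (f s)) (c (f s)) \<in> pos_roots r" unfolding wrv M_pos_roots_def by simp
        moreover have "okr r (f s) (f s) (c (f s)) (c (f s))" using SPg_okr[OF sp(1) o] by simp
        ultimately show "c (f (s - 0)) = 1" using pos_test by auto
      qed
    next
      case (Suc n)
      show ?case
      proof
        assume kl: "k < s - Suc n"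
        define i where "i = s - Suc n"
        have si: "Suc i = s - n" "1 \<le> i" "i + 1 \<le> s" using kl ks unfolding i_def by auto
        have c1: "c (f (Suc i)) = 1" using Suc kl si(1) by auto
        have o: "okr r i (i+1) 1 (-1)" using si ks by (auto simp: okr_def)
        have "rv i (i+1) 1 (-1) \<in> M_pos_roots r s" unfolding Mpos_char using o si
          by (intro exI[of _ i] exI[of _ "i+1"] exI[of _ 1] exI[of _ "-1"]) auto
        moreover have "rv i (i+1) 1 (-1) \<in> levi_roots r k" using in_levi[OF _ o] kl ks unfolding i_def by auto
        ultimately have "w (rv i (i+1) 1 (-1)) \<in> M_pos_roots r s"
          using WMQ_simple[OF w o] sig1[OF si(2) si(3)] ks by auto
        then have "rv (f i) (f (i+1)) (c (f i)) (-1) \<in> pos_roots r" using c1 unfolding wrv M_pos_roots_def by simp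
        moreover have "okr r (f i) (f (i+1)) (c (f i)) (-1)" using SPg_okr[OF sp(1) o] c1 by simp
        ultimately show "c (f (s - Suc n)) = 1" using pos_test unfolding i_def by fastforce
      qed
    qed
  qed
  assume "k < i" "i \<le> s"
  then show "c (f i) = 1" using P[rule_format, of "s - i"] by auto
qed

lemma pair_chi: "finite R \<Longrightarrow> pair r (chi R L w) x = (\<Sum>b\<in>{b \<in> R - L. w b \<in> R}. pair r b x)"
  unfolding pair_def chi_def by (simp add: of_int_sum sum_distrib_right) (rule sum.swap)

lemma pairN:
  assumes "k < r" "k \<le> s" "b \<in> pos_roots r - levi_roots r k - M_roots r s"
  shows "pair r b (coweight r k) = 1"
proof -
  obtain i j y where h: "okr r i j 1 y" "i \<le> j" "b = rv i j 1 y" using assms(3) by (auto simp: pos_char)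
  have "b \<in> roots r" using assms(3) unfolding roots_def by auto
  then have "\<not> trivial_on_tau s b" using assms(3) unfolding M_roots_def by auto
  then have nb: "\<not> (i \<le> s \<longleftrightarrow> j \<le> s)" using tau_rv[OF h(1)] h(3) by auto
  then have "i \<le> s" "s < j" using h(2) by auto
  have "pair r b (coweight r k) \<noteq> 0" using assms(3) \<open>b \<in> roots r\<close> unfolding levi_roots_def by auto
  then show ?thesis unfolding h(3) pair_rv[OF assms(1) h(1)] using \<open>s < j\<close> assms(2)
    by (auto split: if_splits)
qed

abbreviation "NN r s k \<equiv> pos_roots r - levi_roots r k - M_roots r s"

lemma finite_NN: "finite (NN r s k)" using finite_pos by blast

lemma chi_diff:
  assumes "k < r" "k \<le> s" "\<forall>b\<in>M_pos_roots r s. w b \<in> M_roots r s"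
  shows "pair r (chi (pos_roots r) (levi_roots r k) w) (coweight r k) - pair r (chi (M_pos_roots r s) (levi_roots r k) w) (coweight r k)
     = of_nat (card {b \<in> NN r s k. w b \<in> pos_roots r})"
proof -
  define S1 where "S1 = {b \<in> pos_roots r - levi_roots r k. w b \<in> pos_roots r}"
  define S2 where "S2 = {b \<in> M_pos_roots r s - levi_roots r k. w b \<in> M_pos_roots r s}"
  have sub: "S2 \<subseteq> S1" unfolding S1_def S2_def M_pos_roots_def by auto
  have f1: "finite S1" unfolding S1_def using finite_pos by auto
  have dd: "S1 - S2 = {b \<in> NN r s k. w b \<in> pos_roots r}"
    using assms(3) unfolding S1_def S2_def M_pos_roots_def by auto
  have "pair r (chi (pos_roots r) (levi_roots r k) w) (coweight r k) - pair r (chi (M_pos_roots r s) (levi_roots r k) w) (coweight r k)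
     = (\<Sum>b\<in>S1. pair r b (coweight r k)) - (\<Sum>b\<in>S2. pair r b (coweight r k))"
    unfolding S1_def S2_def by (simp add: pair_chi finite_pos finite_Mpos)
  also have "\<dots> = (\<Sum>b\<in>S1 - S2. pair r b (coweight r k))" using sum_diff[OF f1 sub, of "\<lambda>b. pair r b (coweight r k)"] by simp
  also have "\<dots> = (\<Sum>b\<in>S1 - S2. 1)" unfolding dd using pairN[OF assms(1,2)] by (intro sum.cong) auto
  finally show ?thesis unfolding dd by simp
qed

lemma len_diff:
  assumes "\<forall>b\<in>M_pos_roots r s. w b \<in> M_roots r s"
    and "\<forall>b\<in>pos_roots r - M_roots r s. b \<in> levi_roots r k \<longrightarrow> w b \<in> pos_roots r"
  shows "int (len (pos_roots r) w) - int (len (M_pos_roots r s) w) = int (card {b \<in> NN r s k. w b \<notin> pos_roots r})"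
proof -
  define T1 where "T1 = {b \<in> pos_roots r. w b \<notin> pos_roots r}"
  define T2 where "T2 = {b \<in> M_pos_roots r s. w b \<notin> pos_roots r}"
  have e2: "{b \<in> M_pos_roots r s. w b \<notin> M_pos_roots r s} = T2"
    using assms(1) unfolding T2_def M_pos_roots_def by auto
  have sub: "T2 \<subseteq> T1" unfolding T1_def T2_def M_pos_roots_def by auto
  have f1: "finite T1" unfolding T1_def using finite_pos by auto
  have f2: "finite T2" using finite_subset[OF sub f1] .
  have dd: "T1 - T2 = {b \<in> NN r s k. w b \<notin> pos_roots r}"
    using assms(2) unfolding T1_def T2_def M_pos_roots_def by auto
  have "card (T1 - T2) = card T1 - card T2" by (rule card_Diff_subset[OF f2 sub])
  moreover have "card T2 \<le> card T1" by (rule card_mono[OF f1 sub])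
  ultimately show ?thesis unfolding len_def e2 T1_def[symmetric] dd[symmetric] by simp
qed

lemma dim_diff: "dimGP r k - dimMQ r s k = int (card (NN r s k))"
proof -
  have sub: "M_pos_roots r s - levi_roots r k \<subseteq> pos_roots r - levi_roots r k" unfolding M_pos_roots_def by auto
  have f2: "finite (M_pos_roots r s - levi_roots r k)" using finite_Mpos by auto
  have dd: "(pos_roots r - levi_roots r k) - (M_pos_roots r s - levi_roots r k) = NN r s k"
    unfolding M_pos_roots_def by auto
  have "card (NN r s k) = card (pos_roots r - levi_roots r k) - card (M_pos_roots r s - levi_roots r k)"
    using card_Diff_subset[OF f2 sub] dd by simp
  moreover have "card (M_pos_roots r s - levi_roots r k) \<le> card (pos_roots r - levi_roots r k)"
    using card_mono[OF _ sub] finite_pos by auto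
  ultimately show ?thesis unfolding dimGP_def dimMQ_def by simp
qed

lemma card_split: "finite A \<Longrightarrow> card {b \<in> A. P b} + card {b \<in> A. \<not> P b} = card A"
proof -
  assume f: "finite A"
  have "{b \<in> A. P b} \<union> {b \<in> A. \<not> P b} = A" by auto
  moreover have "{b \<in> A. P b} \<inter> {b \<in> A. \<not> P b} = {}" by auto
  ultimately show ?thesis using card_Un_disjoint[of "{b \<in> A. P b}" "{b \<in> A. \<not> P b}"] f by auto
qed

lemma codim_diff:
  assumes "\<forall>b\<in>M_pos_roots r s. w b \<in> M_roots r s"
    and "\<forall>b\<in>pos_roots r - M_roots r s. b \<in> levi_roots r k \<longrightarrow> w b \<in> pos_roots r"
  shows "codimG r k w - codimM r s k w = int (card {b \<in> NN r s k. w b \<in> pos_roots r})"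
  using len_diff[OF assms] dim_diff[of r k s] card_split[OF finite_NN[of r k s], where P="\<lambda>b. w b \<in> pos_roots r"]
  unfolding codimG_def codimM_def by linarith

lemma WMQ_hyps:
  assumes w: "w \<in> W_MQ r s k" and ks: "1 \<le> k" "k \<le> s" "s < r"
  shows "\<forall>b\<in>M_pos_roots r s. w b \<in> M_roots r s"
    and "\<forall>b\<in>pos_roots r - M_roots r s. b \<in> levi_roots r k \<longrightarrow> w b \<in> pos_roots r"
proof -
  have wm: "w \<in> W_M r s" using w unfolding W_MQ_def min_coset_reps_def by auto
  obtain g f c where sp: "SPg r s g f c" "w = (\<lambda>v j. c j * v (g j))"
    using SP_WM[OF wm] unfolding SP_def by blast
  show "\<forall>b\<in>M_pos_roots r s. w b \<in> M_roots r s"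
    using SPg_M[OF sp(1)] unfolding sp(2) M_pos_roots_def by auto
  show "\<forall>b\<in>pos_roots r - M_roots r s. b \<in> levi_roots r k \<longrightarrow> w b \<in> pos_roots r"
  proof (intro ballI impI)
    fix b assume b: "b \<in> pos_roots r - M_roots r s" "b \<in> levi_roots r k"
    obtain i j y where h: "okr r i j 1 y" "i \<le> j" "b = rv i j 1 y" using b(1) by (auto simp: pos_char)
    have "b \<in> roots r" using b(1) unfolding roots_def by auto
    then have "\<not> trivial_on_tau s b" using b(1) unfolding M_roots_def by auto
    then have nb: "\<not> (i \<le> s \<longleftrightarrow> j \<le> s)" using tau_rv[OF h(1)] h(3) by auto
    then have ij: "i \<le> s" "s < j" using h(2) by auto
    have pz: "pair r b (coweight r k) = 0" using b(2) unfolding levi_roots_def by auto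
    have kr: "k < r" using ks by simp
    have "k < i" using pz unfolding h(3) pair_rv[OF kr h(1)] using ks ij by (auto split: if_splits)
    then have c1: "c (f i) = 1" using WMQ_c[OF w ks sp] ij by auto
    have wb: "w b = rv (f i) (f j) 1 (y * c (f j))" unfolding h(3) sp(2) SPg_rv[OF sp(1)] c1 by simp
    have o: "okr r (f i) (f j) 1 (y * c (f j))" using SPg_okr[OF sp(1) h(1)] c1 by simp
    have "f i \<le> s" "s < f j" using SPg_blk[OF sp(1), of i] SPg_blk[OF sp(1), of j] ij by auto
    then show "w b \<in> pos_roots r" unfolding wb using pos_test[OF o] by auto
  qed
qed

lemma pair_minus: "pair r (u - v) x = pair r u x - pair r v x"
  unfolding pair_def by (simp add: algebra_simps sum_subtractf)

lemma pair_plus: "pair r (u + v) x = pair r u x + pair r v x"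
  unfolding pair_def by (simp add: algebra_simps sum.distrib)

lemma pair_zero: "pair r 0 x = 0"
  unfolding pair_def by simp

lemma pair_suml: "pair r (\<Sum>w\<leftarrow>ws. h w) x = (\<Sum>w\<leftarrow>ws. pair r (h w) x)"
proof (induction ws)
  case Nil then show ?case by (simp add: pair_def)
next
  case (Cons a ws)
  have "pair r (\<Sum>w\<leftarrow>a # ws. h w) x = pair r (h a + (\<Sum>w\<leftarrow>ws. h w)) x" by simp
  also have "\<dots> = pair r (h a) x + pair r (\<Sum>w\<leftarrow>ws. h w) x" by (rule pair_plus)
  also have "\<dots> = pair r (h a) x + (\<Sum>w\<leftarrow>ws. pair r (h w) x)" using Cons.IH by (simp only:)
  finally show ?case by (simp only: list.map sum_list.Cons)
qed

theorem mainTheorem9: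
  fixes r s k :: nat and ws :: "((nat \<Rightarrow> int) \<Rightarrow> (nat \<Rightarrow> int)) list"
  assumes "1 \<le> k" "k \<le> s" "s < r"
    and "\<forall>w \<in> set ws. w \<in> W_MQ r s k"
  shows "theta r k ws - thetaM r s k ws = of_int (expdimG r k ws - expdimM r s k ws)"
proof -
  define pG where "pG w = pair r (chi (pos_roots r) (levi_roots r k) w) (coweight r k)" for w
  define pM where "pM w = pair r (chi (M_pos_roots r s) (levi_roots r k) w) (coweight r k)" for w
  have kr: "k < r" using assms by simp
  have idh: "\<forall>b\<in>M_pos_roots r s. id b \<in> M_roots r s" unfolding M_pos_roots_def by auto
  have e0: "pG id - pM id = of_int (dimGP r k - dimMQ r s k)"
  proof -
    have "{b \<in> NN r s k. id b \<in> pos_roots r} = NN r s k" by auto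
    then show ?thesis unfolding pG_def pM_def chi_diff[OF kr assms(2) idh] dim_diff by simp
  qed
  have ew: "pG w - pM w = of_int (codimG r k w - codimM r s k w)" if "w \<in> set ws" for w
  proof -
    have wq: "w \<in> W_MQ r s k" using that assms(4) by auto
    show ?thesis unfolding pG_def pM_def chi_diff[OF kr assms(2) WMQ_hyps(1)[OF wq assms(1-3)]]
        codim_diff[OF WMQ_hyps[OF wq assms(1-3)]] by simp
  qed
  have th: "theta r k ws - thetaM r s k ws = (pG id - pM id) - (\<Sum>w\<leftarrow>ws. pG w - pM w)"
    unfolding theta_def thetaM_def pair_minus pair_suml pG_def pM_def sum_list_subtractf by simp
  have sl: "(\<Sum>w\<leftarrow>ws. pG w - pM w) = of_int (\<Sum>w\<leftarrow>ws. codimG r k w - codimM r s k w)"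
    using ew
  proof (induction ws)
    case Nil then show ?case by simp
  next
    case (Cons a ws) then show ?case by simp
  qed
  have ed: "expdimG r k ws - expdimM r s k ws = (dimGP r k - dimMQ r s k) - (\<Sum>w\<leftarrow>ws. codimG r k w - codimM r s k w)"
    unfolding expdimG_def expdimM_def sum_list_subtractf by simp
  show ?thesis unfolding th sl ed e0 by simp
qed

end
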